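(* Let $\pi=a_1a_2\cdots a_n\in\mathfrak{S}_n$, let $i_1<i_2<\cdots<i_d$ be the descents of $\pi$ (the indices $i\in[n-1]$ with $a_i>a_{i+1}$) and let $x_k=a_{i_k}$. Put $\pi_0=\pi$ and $\pi_k=r^{x_k}(\pi_{k-1})$ for $k=1,\dots,d$. Then $S(\pi)=\pi_d$, where $S$ is the stack-sorting operator.
   Context: The stack-sorting operator $S$ is defined recursively on words with distinct letters from $\{1,2,\dots\}$: $S$ of the empty word is empty; if $w$ is nonempty write $w=LmR$ with $m$ the greatest letter of $w$, and set $S(w)=S(L)S(R)m$. For a permutation $\sigma=c_1\cdots c_n\in\mathfrak{S}_n$ and a letter $x=c_k$, put $c_{n+1}=n+1$ and define $r^x(\sigma)$ as the permutation obtained by removing $x$ and inserting it between the first pair of consecutive letters $c_j,c_{j+1}$ with $j>k$ (i.e. to the right of $x$) such that $c_j<x<c_{j+1}$ (if no such pair exists, $r^x(\sigma)=\sigma$). *)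

theory Defs
  imports Main
begin

text \<open>Words are lists of naturals with distinct letters; a permutation of
  [n] is a list w with distinct w and set w = {1..n}.  Positions are 0-indexed.\<close>

definition is_perm :: "nat \<Rightarrow> nat list \<Rightarrow> bool" where
  "is_perm n w \<longleftrightarrow> distinct w \<and> set w = {1..n}"

lemma takeWhile_shorter: "m \<in> set w \<Longrightarrow> length (takeWhile (\<lambda>y. y \<noteq> m) w) < length w"
  by (induction w) auto

lemma dropWhile_tl_shorter: "w \<noteq> [] \<Longrightarrow> length (tl (dropWhile P w)) < length w"
  using length_dropWhile_le[of P w] by (cases w) auto

function stack_sort :: "nat list \<Rightarrow> nat list" where
  "stack_sort w =
     (if w = [] then []
      else (let m = Max (set w);
                L = takeWhile (\<lambda>y. y \<noteq> m) w;
                R = tl (dropWhile (\<lambda>y. y \<noteq> m) w)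
            in stack_sort L @ stack_sort R @ [m]))"
  by pat_completeness auto
termination
  by (relation "measure length")
     (auto simp: Let_def takeWhile_shorter dropWhile_tl_shorter simp del: length_tl)

text \<open>The letter sequence c_1 .. c_n c_{n+1} with c_{n+1} = n+1 (0-indexed).\<close>
definition ext_letter :: "nat list \<Rightarrow> nat \<Rightarrow> nat" where
  "ext_letter w j = (if j < length w then w ! j else length w + 1)"

text \<open>Admissible gaps for moving x at position k: 0-indexed j with k < j < n and
  c_j < x < c_{j+1}; x is inserted between c_j and c_{j+1}.\<close>
definition gap_ok :: "nat list \<Rightarrow> nat \<Rightarrow> nat \<Rightarrow> bool" where
  "gap_ok w x j \<longleftrightarrow> (\<exists>k. k < length w \<and> w ! k = x \<and> k < j) \<and> j < length w \<and>
      ext_letter w j < x \<and> x < ext_letter w (Suc j)"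

definition move_right :: "nat \<Rightarrow> nat list \<Rightarrow> nat list" where
  "move_right x w =
     (if x \<in> set w \<and> (\<exists>j. gap_ok w x j) then
        (let k = the_elem {k. k < length w \<and> w ! k = x};
             j = (LEAST j. gap_ok w x j)
         in take k w @ drop (Suc k) (take (Suc j) w) @ [x] @ drop (Suc j) w)
      else w)"

definition descent_tops :: "nat list \<Rightarrow> nat list" where
  "descent_tops w = [w ! i. i \<leftarrow> [0..<length w - 1], w ! (Suc i) < w ! i]"

end

theory Submission
  imports Defs
begin

fun g :: "nat \<Rightarrow> nat list \<Rightarrow> nat list option" where
  "g x (a # b # r) = (if a < x \<and> x < b then Some (a # x # b # r) else map_option (Cons a) (g x (b # r)))"
| "g x _ = None"

definition M :: "nat \<Rightarrow> nat list \<Rightarrow> nat list" where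
  "M x v = (if x \<in> set v then (case g x (tl (dropWhile (\<lambda>y. y \<noteq> x) v)) of None \<Rightarrow> v
            | Some s \<Rightarrow> takeWhile (\<lambda>y. y \<noteq> x) v @ s) else v)"

definition bef :: "nat list \<Rightarrow> nat \<Rightarrow> nat \<Rightarrow> bool" where
  "bef v z y \<longleftrightarrow> (\<exists>a b. v = a @ z # b \<and> y \<in> set b)"

lemma tw_split: "x \<notin> set p \<Longrightarrow> takeWhile (\<lambda>y. y \<noteq> x) (p @ x # q) = p"
  by (induction p) auto

lemma dw_split: "x \<notin> set p \<Longrightarrow> dropWhile (\<lambda>y. y \<noteq> x) (p @ x # q) = x # q"
  by (induction p) auto

lemma M_split: "x \<notin> set p \<Longrightarrow> M x (p @ x # q) = (case g x q of None \<Rightarrow> p @ x # q | Some s \<Rightarrow> p @ s)"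
  unfolding M_def by (simp add: tw_split dw_split split: option.split)

lemma M_notin: "x \<notin> set v \<Longrightarrow> M x v = v"
  unfolding M_def by auto

lemma g_Some: "g x s = Some r \<Longrightarrow> \<exists>i. Suc i < length s \<and> s!i < x \<and> x < s!Suc i \<and>
   (\<forall>i'<i. \<not>(s!i' < x \<and> x < s!Suc i')) \<and> r = take (Suc i) s @ x # drop (Suc i) s"
proof (induction x s arbitrary: r rule: g.induct)
  case (1 x a b t)
  show ?case
  proof (cases "a < x \<and> x < b")
    case True
    then show ?thesis using 1 by (intro exI[of _ 0]) auto
  next
    case False
    then obtain r' where r': "g x (b # t) = Some r'" "r = a # r'" using 1 by auto
    from "1.IH"[OF False r'(1)] obtain i where i: "Suc i < length (b#t)" "(b#t)!i < x" "x < (b#t)!Suc i"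
      "\<forall>i'<i. \<not>((b#t)!i' < x \<and> x < (b#t)!Suc i')" "r' = take (Suc i) (b#t) @ x # drop (Suc i) (b#t)" by blast
    show ?thesis
    proof (intro exI[of _ "Suc i"] conjI allI impI)
      fix i' assume "i' < Suc i"
      then show "\<not>((a#b#t)!i' < x \<and> x < (a#b#t)!Suc i')"
        using False i(4) by (cases i') auto
    qed (use i r' in auto)
  qed
qed auto

lemma g_None: "g x s = None \<Longrightarrow> Suc i < length s \<Longrightarrow> \<not>(s!i < x \<and> x < s!Suc i)"
proof (induction x s arbitrary: i rule: g.induct)
  case (1 x a b t)
  then show ?case by (cases i) (auto split: if_splits)
qed auto

lemma g_append: "g x s = Some r \<Longrightarrow> g x (s @ v) = Some (r @ v)"
  by (induction x s arbitrary: r rule: g.induct) (auto split: if_splits)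

lemma g_exists: "y \<in> set s \<Longrightarrow> y < x \<Longrightarrow> s \<noteq> [] \<Longrightarrow> x < last s \<Longrightarrow> x \<notin> set s \<Longrightarrow> g x s \<noteq> None"
proof (induction x s arbitrary: y rule: g.induct)
  case (1 x a b t)
  show ?case
  proof (cases "a < x \<and> x < b")
    case True then show ?thesis by simp
  next
    case False
    have "\<exists>y'\<in>set (b#t). y' < x"
    proof (cases "y = a")
      case True
      then have "b < x" using False 1 by (metis linorder_neqE_nat list.set_intros(1) list.set_intros(2))
      then show ?thesis by auto
    next
      case False then show ?thesis using 1 by auto
    qed
    then obtain y' where "y' \<in> set (b#t)" "y' < x" by blast
    with "1.IH"[OF False] 1 False show ?thesis by auto
  qed
qed auto

lemma g_snoc_big: "q \<noteq> [] \<Longrightarrow> \<forall>a\<in>set q. a < x \<Longrightarrow> x < b \<Longrightarrow> g x (q @ [b]) = Some (q @ [x, b])"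
proof (induction q)
  case (Cons a q)
  then show ?case by (cases q) auto
qed simp

lemma g_snoc_small: "s \<noteq> [] \<Longrightarrow> x < last s \<Longrightarrow> g x (s @ [B]) = map_option (\<lambda>r. r @ [B]) (g x s)"
proof (induction x s rule: g.induct)
  case (1 x a b t)
  then show ?case by (cases "g x (b#t)") auto
qed auto

lemma g_props:
  assumes "g x q = Some r" "x \<notin> set q" "distinct q"
  shows "set r = insert x (set q) \<and> distinct r \<and> last r = last q \<and> (\<exists>q1 q2. q = q1 @ q2 \<and> r = q1 @ x # q2 \<and> q2 \<noteq> [])"
proof -
  from g_Some[OF assms(1)] obtain i where i: "Suc i < length q" "r = take (Suc i) q @ x # drop (Suc i) q" by blast
  define q1 where "q1 = take (Suc i) q"
  define q2 where "q2 = drop (Suc i) q"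
  have q: "q = q1 @ q2" "q2 \<noteq> []" "r = q1 @ x # q2" using i unfolding q1_def q2_def by auto
  show ?thesis using assms(2,3) q by auto
qed

lemma M_props:
  assumes "distinct v"
  shows "distinct (M x v) \<and> set (M x v) = set v \<and> (v \<noteq> [] \<longrightarrow> x \<noteq> last v \<longrightarrow> last (M x v) = last v)"
proof (cases "x \<in> set v")
  case False then show ?thesis using assms by (simp add: M_notin)
next
  case True
  then obtain p q where v: "v = p @ x # q" by (meson split_list)
  have xp: "x \<notin> set p" "x \<notin> set q" "distinct q" using assms v by auto
  show ?thesis
  proof (cases "g x q")
    case None then show ?thesis using v xp assms by (simp add: M_split)
  next
    case (Some r)
    note gp = g_props[OF Some xp(2,3)]
    have Mv: "M x v = p @ r" using v xp Some by (simp add: M_split)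
    have dv: "distinct p" "set p \<inter> set q = {}" using assms v by auto
    have "distinct (p @ r)" using gp dv xp by auto
    moreover have "set (p @ r) = set v" using gp v by auto
    moreover have "x \<noteq> last v \<Longrightarrow> last (p @ r) = last v"
    proof -
      assume "x \<noteq> last v"
      then have "q \<noteq> []" using v by auto
      then show ?thesis using gp v by auto
    qed
    ultimately show ?thesis using Mv by simp
  qed
qed


lemma split_unique: "distinct (a @ y # b) \<Longrightarrow> a @ y # b = a' @ y # b' \<Longrightarrow> a = a' \<and> b = b'"
proof -
  assume d: "distinct (a @ y # b)" and e: "a @ y # b = a' @ y # b'"
  have "y \<notin> set a" "y \<notin> set b" using d by auto
  then show ?thesis using append_Cons_eq_iff[of y a b a' b'] e by blast
qed

lemma bef_ins: "bef (u1 @ u2) z y \<Longrightarrow> bef (u1 @ x # u2) z y"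
proof -
  assume "bef (u1 @ u2) z y"
  then obtain a b where ab: "u1 @ u2 = a @ z # b" "y \<in> set b" unfolding bef_def by blast
  from ab(1) obtain us where "(u1 = a @ us \<and> us @ u2 = z # b) \<or> (u1 @ us = a \<and> u2 = us @ z # b)"
    by (auto simp: append_eq_append_conv2)
  then show ?thesis
  proof
    assume h: "u1 = a @ us \<and> us @ u2 = z # b"
    show ?thesis
    proof (cases us)
      case Nil
      then have "u1 @ x # u2 = (a @ [x]) @ z # b" using h by auto
      then show ?thesis using ab(2) unfolding bef_def by blast
    next
      case (Cons c us')
      then have e: "u1 @ x # u2 = a @ z # (us' @ x # u2)" "b = us' @ u2" using h by auto
      then have "y \<in> set (us' @ x # u2)" using ab(2) by auto
      then show ?thesis using e unfolding bef_def by blast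
    qed
  next
    assume h: "u1 @ us = a \<and> u2 = us @ z # b"
    then have "u1 @ x # u2 = (u1 @ x # us) @ z # b" by auto
    then show ?thesis using ab(2) unfolding bef_def by blast
  qed
qed

lemma bef_del: "bef (u1 @ x # u2) z y \<Longrightarrow> z \<noteq> x \<Longrightarrow> y \<noteq> x \<Longrightarrow> bef (u1 @ u2) z y"
proof -
  assume "bef (u1 @ x # u2) z y" and zx: "z \<noteq> x" and yx: "y \<noteq> x"
  then obtain a b where ab: "u1 @ x # u2 = a @ z # b" "y \<in> set b" unfolding bef_def by blast
  from ab(1) obtain us where "(u1 = a @ us \<and> us @ x # u2 = z # b) \<or> (u1 @ us = a \<and> x # u2 = us @ z # b)"
    by (auto simp: append_eq_append_conv2)
  then show ?thesis
  proof
    assume h: "u1 = a @ us \<and> us @ x # u2 = z # b"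
    then obtain us' where us: "us = z # us'" using zx by (cases us) auto
    then have e: "u1 @ u2 = a @ z # (us' @ u2)" "b = us' @ x # u2" using h by auto
    then have "y \<in> set (us' @ u2)" using ab(2) yx by auto
    then show ?thesis using e unfolding bef_def by blast
  next
    assume h: "u1 @ us = a \<and> x # u2 = us @ z # b"
    then obtain us' where us: "us = x # us'" using zx by (cases us) auto
    then have "u1 @ u2 = (u1 @ us') @ z # b" using h by auto
    then show ?thesis using ab(2) unfolding bef_def by blast
  qed
qed

lemma bef_app: "bef u z y \<Longrightarrow> bef (u @ v) z y"
proof -
  assume "bef u z y"
  then obtain a b where "u = a @ z # b" "y \<in> set b" unfolding bef_def by blast
  then have "u @ v = a @ z # (b @ v)" "y \<in> set (b @ v)" by auto
  then show ?thesis unfolding bef_def by blast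
qed

lemma bef_Cons: "bef u z y \<Longrightarrow> bef (c # u) z y"
proof -
  assume "bef u z y"
  then obtain a b where "u = a @ z # b" "y \<in> set b" unfolding bef_def by blast
  then have "c # u = (c # a) @ z # b" "y \<in> set b" by auto
  then show ?thesis unfolding bef_def by blast
qed

lemma bef_antisym: "distinct v \<Longrightarrow> bef v x y \<Longrightarrow> bef v y x \<Longrightarrow> False"
proof -
  assume d: "distinct v" and "bef v x y" "bef v y x"
  then obtain a b a' b' where h: "v = a @ x # b" "y \<in> set b" "v = a' @ y # b'" "x \<in> set b'"
    unfolding bef_def by blast
  have "length a < length a'"
  proof -
    from h(2) obtain c d' where "b = c @ y # d'" by (meson split_list)
    then have e: "v = (a @ x # c) @ y # d'" using h by auto
    then have d2: "distinct ((a @ x # c) @ y # d')" using d by simp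
    have e2: "(a @ x # c) @ y # d' = a' @ y # b'" using e h(3) by simp
    from split_unique[OF d2 e2] have "a' = a @ x # c" by simp
    then show ?thesis by simp
  qed
  moreover have "length a' < length a"
  proof -
    from h(4) obtain c d' where "b' = c @ x # d'" by (meson split_list)
    then have e: "v = (a' @ y # c) @ x # d'" using h by auto
    then have d2: "distinct ((a' @ y # c) @ x # d')" using d by simp
    have e2: "(a' @ y # c) @ x # d' = a @ x # b" using e h(1) by simp
    from split_unique[OF d2 e2] have "a = a' @ y # c" by simp
    then show ?thesis by simp
  qed
  ultimately show False by simp
qed

lemma bef_in: "distinct (p @ x # q) \<Longrightarrow> bef (p @ x # q) x y \<Longrightarrow> y \<in> set q"
proof -
  assume d: "distinct (p @ x # q)" and "bef (p @ x # q) x y"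
  then obtain a b where h: "p @ x # q = a @ x # b" "y \<in> set b" unfolding bef_def by blast
  from split_unique[OF d h(1)] have "b = q" by simp
  then show ?thesis using h by simp
qed

lemma M_bef:
  assumes "distinct v" "z \<noteq> x" "y \<noteq> x" "bef v z y"
  shows "bef (M x v) z y"
proof (cases "x \<in> set v")
  case False then show ?thesis using assms by (simp add: M_notin)
next
  case True
  then obtain p q where v: "v = p @ x # q" by (meson split_list)
  have xp: "x \<notin> set p" "x \<notin> set q" "distinct q" using assms v by auto
  show ?thesis
  proof (cases "g x q")
    case None then show ?thesis using v xp assms by (simp add: M_split)
  next
    case (Some r)
    from g_props[OF Some xp(2,3)] obtain q1 q2 where qq: "q = q1 @ q2" "r = q1 @ x # q2" by blast
    have "bef ((p @ q1) @ q2) z y" using bef_del[of p x q z y] assms v qq by simp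
    then have "bef ((p @ q1) @ x # q2) z y" by (rule bef_ins)
    then show ?thesis using v xp Some qq by (simp add: M_split)
  qed
qed


fun dtr :: "nat list \<Rightarrow> nat list" where
  "dtr (a # b # r) = (if b < a then a # dtr (b # r) else dtr (b # r))"
| "dtr _ = []"

lemma dtr_set: "set (dtr w) \<subseteq> set w"
  by (induction w rule: dtr.induct) auto

lemma dtr_distinct: "distinct w \<Longrightarrow> distinct (dtr w)"
  by (induction w rule: dtr.induct) (use dtr_set in fastforce)+

lemma dtr_smaller: "x \<in> set (dtr w) \<Longrightarrow> \<exists>y<x. bef w x y"
proof (induction w rule: dtr.induct)
  case (1 a b r)
  show ?case
  proof (cases "x = a \<and> b < a")
    case True
    have "bef (a # b # r) a b" unfolding bef_def by (rule exI[of _ "[]"]) auto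
    then show ?thesis using True by auto
  next
    case False
    then have "x \<in> set (dtr (b # r))" using 1 by (auto split: if_splits)
    then show ?thesis using 1 False bef_Cons by (auto split: if_splits)
  qed
qed auto

lemma dtr_sorted: "sorted_wrt (bef w) (dtr w)"
proof (induction w rule: dtr.induct)
  case (1 a b r)
  have ih: "sorted_wrt (bef (b # r)) (dtr (b # r))" using "1.IH" by (cases "b < a") auto
  have s: "sorted_wrt (bef (a # b # r)) (dtr (b # r))"
    using sorted_wrt_mono_rel[OF _ ih] bef_Cons by blast
  have "\<forall>z\<in>set (dtr (b # r)). bef (a # b # r) a z"
  proof
    fix z assume "z \<in> set (dtr (b # r))"
    then have "z \<in> set (b # r)" using dtr_set by blast
    moreover have "a # b # r = [] @ a # (b # r)" by simp
    ultimately show "bef (a # b # r) a z" unfolding bef_def by blast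
  qed
  then show ?case using s by auto
qed auto

lemma dtr_app: "\<forall>a\<in>set u. a < m \<Longrightarrow> dtr (u @ m # R) = dtr u @ dtr (m # R)"
  by (induction u rule: dtr.induct) auto

lemma dtr_max: "\<forall>a\<in>set R. a < m \<Longrightarrow> dtr (m # R) = (if R = [] then [] else m # dtr R)"
  by (cases R) auto

lemma M_pre: "x \<notin> set P \<Longrightarrow> M x (P @ v) = P @ M x v"
proof (cases "x \<in> set v")
  case True
  assume xP: "x \<notin> set P"
  from split_list_first[OF True] obtain p q where v: "v = p @ x # q" "x \<notin> set p" by blast
  have "M x ((P @ p) @ x # q) = (case g x q of None \<Rightarrow> (P @ p) @ x # q | Some s \<Rightarrow> (P @ p) @ s)"
    using xP v by (intro M_split) auto
  moreover have "M x (p @ x # q) = (case g x q of None \<Rightarrow> p @ x # q | Some s \<Rightarrow> p @ s)"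
    using v by (intro M_split) auto
  ultimately show ?thesis using v by (auto split: option.split)
next
  case False
  assume "x \<notin> set P"
  then show ?thesis using False by (simp add: M_notin)
qed

lemma fold_pre: "set xs \<inter> set P = {} \<Longrightarrow> fold M xs (P @ v) = P @ fold M xs v"
  by (induction xs arbitrary: v) (auto simp: M_pre)

lemma M_snoc:
  assumes "u \<noteq> []" "x < last u" "x \<noteq> B"
  shows "M x (u @ [B]) = M x u @ [B]"
proof (cases "x \<in> set u")
  case True
  from split_list_first[OF True] obtain p q where u: "u = p @ x # q" "x \<notin> set p" by blast
  have q: "q \<noteq> []" "last q = last u" using u assms by auto
  have gs: "g x (q @ [B]) = map_option (\<lambda>r. r @ [B]) (g x q)"
    using g_snoc_small[OF q(1)] q assms by simp
  have "M x (p @ x # (q @ [B])) = (case g x (q @ [B]) of None \<Rightarrow> p @ x # (q @ [B]) | Some s \<Rightarrow> p @ s)"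
    using u by (intro M_split) auto
  moreover have "M x (p @ x # q) = (case g x q of None \<Rightarrow> p @ x # q | Some s \<Rightarrow> p @ s)"
    using u by (intro M_split) auto
  ultimately show ?thesis using u gs by (auto split: option.split)
next
  case False
  then show ?thesis using assms by (simp add: M_notin)
qed

lemma fold_snoc:
  "u \<noteq> [] \<Longrightarrow> distinct u \<Longrightarrow> \<forall>x\<in>set xs. x < last u \<and> x \<noteq> B \<Longrightarrow> fold M xs (u @ [B]) = fold M xs u @ [B]"
proof (induction xs arbitrary: u)
  case (Cons x xs)
  have p: "distinct (M x u)" "set (M x u) = set u" "last (M x u) = last u"
    using M_props[OF Cons.prems(2), of x] Cons.prems by auto
  have ne: "M x u \<noteq> []" using p(2) Cons.prems(1) by auto
  have "M x (u @ [B]) = M x u @ [B]" using M_snoc Cons.prems by auto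
  then show ?case using Cons.IH[OF ne p(1)] Cons.prems p(3) by simp
qed simp

lemma fold_left:
  "u \<noteq> [] \<Longrightarrow> distinct (u @ v) \<Longrightarrow> distinct xs \<Longrightarrow> set xs \<subseteq> set u \<Longrightarrow> \<forall>x\<in>set xs. x < last u \<Longrightarrow>
   \<forall>i<length xs. \<exists>y. y < xs!i \<and> bef u (xs!i) y \<and> y \<notin> set (take i xs) \<Longrightarrow>
   fold M xs (u @ v) = fold M xs u @ v"
proof (induction xs arbitrary: u)
  case (Cons x xs)
  have xu: "x \<in> set u" using Cons.prems by auto
  from split_list_first[OF xu] obtain p q where u: "u = p @ x # q" "x \<notin> set p" by blast
  have du: "distinct u" using Cons.prems(2) by auto
  have xq: "x \<notin> set q" "distinct q" using du u by auto
  from Cons.prems(6) obtain y where y: "y < x" "bef u x y" by fastforce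
  have yq: "y \<in> set q" using bef_in du u y by metis
  have xl: "x < last u" using Cons.prems by auto
  have q: "q \<noteq> []" "last q = last u" using u xl by auto
  have "g x q \<noteq> None" using g_exists[OF yq y(1) q(1)] q xl xq by auto
  then obtain r where r: "g x q = Some r" by auto
  have Mu: "M x u = p @ r" using u r by (simp add: M_split)
  have "M x (p @ x # (q @ v)) = p @ r @ v" using u r g_append[OF r] by (simp add: M_split)
  then have Muv: "M x (u @ v) = M x u @ v" using u Mu by simp
  have p1: "distinct (M x u @ v)" using M_props[OF Cons.prems(2), of x] Muv by simp
  have p2: "set (M x u) = set u" "last (M x u) = last u" using M_props[OF du, of x] xl Cons.prems(1) by auto
  have ne: "M x u \<noteq> []" using p2 Cons.prems(1) by auto
  have inv: "\<forall>i<length xs. \<exists>y. y < xs!i \<and> bef (M x u) (xs!i) y \<and> y \<notin> set (take i xs)"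
  proof (intro allI impI)
    fix i assume i: "i < length xs"
    from Cons.prems(6) i obtain y where y: "y < xs!i" "bef u (xs!i) y" "y \<notin> set (take (Suc i) (x # xs))"
      by fastforce
    have "xs!i \<noteq> x" using Cons.prems(3) i by (metis distinct.simps(2) nth_mem)
    moreover have "y \<noteq> x" using y(3) by simp
    ultimately have "bef (M x u) (xs!i) y" using M_bef[OF du] y(2) by blast
    then show "\<exists>y. y < xs!i \<and> bef (M x u) (xs!i) y \<and> y \<notin> set (take i xs)" using y by auto
  qed
  have "fold M xs (M x u @ v) = fold M xs (M x u) @ v"
    using Cons.IH[OF ne p1 _ _ _ inv] Cons.prems p2 by auto
  then show ?case using Muv by simp
qed simp

lemma ss_nil: "stack_sort [] = []"
  by (subst stack_sort.simps) simp

lemma ss_split: "m = Max (set w) \<Longrightarrow> w = L @ m # R \<Longrightarrow> m \<notin> set L \<Longrightarrow>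
   stack_sort w = stack_sort L @ stack_sort R @ [m]"
  apply (subst stack_sort.simps)
  apply (simp del: stack_sort.simps add: Let_def tw_split dw_split)
  done

lemma ss_set: "set (stack_sort w) = set w"
proof (induction "length w" arbitrary: w rule: less_induct)
  case less
  show ?case
  proof (cases "w = []")
    case True then show ?thesis by (simp add: ss_nil)
  next
    case False
    define m where "m = Max (set w)"
    have mw: "m \<in> set w" using False m_def by simp
    from split_list_first[OF mw] obtain L R where w: "w = L @ m # R" "m \<notin> set L" by blast
    have "stack_sort w = stack_sort L @ stack_sort R @ [m]" using ss_split m_def w by blast
    then show ?thesis using less w by simp
  qed
qed


theorem gen:
  "distinct w \<Longrightarrow> \<forall>a\<in>set w. a < B \<Longrightarrow> fold M (dtr w) (w @ [B]) = stack_sort w @ [B]"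
proof (induction "length w" arbitrary: w B rule: less_induct)
  case less
  show ?case
  proof (cases "w = []")
    case True then show ?thesis by (simp add: ss_nil)
  next
    case False
    define m where "m = Max (set w)"
    have mw: "m \<in> set w" using False m_def by simp
    from split_list_first[OF mw] obtain L R where w: "w = L @ m # R" "m \<notin> set L" by blast
    have ss: "stack_sort w = stack_sort L @ stack_sort R @ [m]" using ss_split m_def w by blast
    have dw: "distinct (L @ m # R)" using less.prems w by simp
    have ltm: "\<forall>a\<in>set L. a < m" "\<forall>a\<in>set R. a < m"
    proof -
      have "\<forall>a\<in>set w. a \<le> m" using m_def by simp
      then show "\<forall>a\<in>set L. a < m" "\<forall>a\<in>set R. a < m" using dw w
        by (auto simp: le_less)
    qed
    have mB: "m < B" using less.prems mw by auto
    have Bw: "B \<notin> set w" using less.prems by auto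
    have dtw: "dtr w = dtr L @ (if R = [] then [] else m # dtr R)"
      using w dtr_app[OF ltm(1)] dtr_max[OF ltm(2)] by simp
    have lenL: "length L < length w" "length R < length w" using w by auto
    have IHL: "fold M (dtr L) (L @ [m]) = stack_sort L @ [m]"
      using less.hyps[OF lenL(1)] dw ltm(1) by simp
    have IHR: "fold M (dtr R) (R @ [m]) = stack_sort R @ [m]"
      using less.hyps[OF lenL(2)] dw ltm(2) by simp
    have inv: "\<forall>i<length (dtr L). \<exists>y. y < dtr L!i \<and> bef (L @ [m]) (dtr L!i) y \<and> y \<notin> set (take i (dtr L))"
    proof (intro allI impI)
      fix i assume i: "i < length (dtr L)"
      then have "dtr L ! i \<in> set (dtr L)" by simp
      from dtr_smaller[OF this] obtain y where y: "y < dtr L ! i" "bef L (dtr L ! i) y" by blast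
      have "y \<notin> set (take i (dtr L))"
      proof
        assume "y \<in> set (take i (dtr L))"
        then obtain i' where i': "i' < i" "y = dtr L ! i'" using i
          by (auto simp: in_set_conv_nth)
        have "bef L y (dtr L ! i)" using sorted_wrt_nth_less[OF dtr_sorted i'(1) i] i' by simp
        then show False using bef_antisym[OF _ y(2)] dw by simp
      qed
      then show "\<exists>y. y < dtr L!i \<and> bef (L @ [m]) (dtr L!i) y \<and> y \<notin> set (take i (dtr L))"
        using y bef_app by blast
    qed
    have step1: "fold M (dtr L) ((L @ [m]) @ (R @ [B])) = fold M (dtr L) (L @ [m]) @ R @ [B]"
      apply (rule fold_left)
      using dw Bw w dtr_distinct dtr_set[of L] ltm(1) inv by auto
    have e1: "fold M (dtr L) (w @ [B]) = stack_sort L @ m # R @ [B]"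
      using step1 IHL w by simp
    show ?thesis
    proof (cases "R = []")
      case True
      then show ?thesis using e1 dtw ss by (simp add: ss_nil)
    next
      case False
      have mSL: "m \<notin> set (stack_sort L)" using ss_set w by simp
      have "M m (stack_sort L @ m # (R @ [B])) = stack_sort L @ R @ [m, B]"
        using M_split[OF mSL] g_snoc_big[OF False ltm(2) mB] by simp
      then have e2: "fold M (m # dtr R) (stack_sort L @ m # R @ [B]) = fold M (dtr R) (stack_sort L @ (R @ [m]) @ [B])"
        by simp
      have disj: "set (dtr R) \<inter> set (stack_sort L) = {}" using ss_set[of L] dtr_set[of R] dw by auto
      have "fold M (dtr R) (stack_sort L @ (R @ [m]) @ [B]) = stack_sort L @ fold M (dtr R) ((R @ [m]) @ [B])"
        using fold_pre[OF disj] by simp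
      also have "fold M (dtr R) ((R @ [m]) @ [B]) = fold M (dtr R) (R @ [m]) @ [B]"
      proof (rule fold_snoc)
        show "\<forall>x\<in>set (dtr R). x < last (R @ [m]) \<and> x \<noteq> B"
        proof
          fix x assume "x \<in> set (dtr R)"
          then have "x < m" using ltm(2) dtr_set[of R] by blast
          then show "x < last (R @ [m]) \<and> x \<noteq> B" using mB by simp
        qed
      qed (use dw in auto)
      finally show ?thesis using e1 e2 dtw ss IHR False by simp
    qed
  qed
qed

lemma descent_tops_Cons2: "descent_tops (a # b # r) = (if b < a then [a] else []) @ descent_tops (b # r)"
  unfolding descent_tops_def by (simp add: upt_conv_Cons map_Suc_upt[symmetric] comp_def del: upt_Suc cong: if_cong)

lemma descent_tops_dtr: "descent_tops w = dtr w"
proof (induction w rule: dtr.induct)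
  case (1 a b r)
  then show ?case by (simp add: descent_tops_Cons2)
qed (auto simp: descent_tops_def)


lemma bridge:
  assumes dw: "distinct w" and le: "\<forall>a\<in>set w. a \<le> length w" and xw: "x \<in> set w"
  shows "move_right x w @ [length w + 1] = M x (w @ [length w + 1])"
proof -
  define B where "B = length w + 1"
  from split_list_first[OF xw] obtain p q where w: "w = p @ x # q" "x \<notin> set p" by blast
  define s where "s = q @ [B]"
  have ws: "w @ [B] = p @ x # s" using w s_def by simp
  have Mw: "M x (w @ [B]) = (case g x s of None \<Rightarrow> p @ x # s | Some r \<Rightarrow> p @ r)"
    using ws M_split[OF w(2)] by simp
  have wpx: "w ! length p = x" using w by simp
  have idx: "{k. k < length w \<and> w ! k = x} = {length p}"
  proof -
    have "\<And>k. k < length w \<Longrightarrow> w ! k = x \<Longrightarrow> k = length p"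
      using dw wpx w nth_eq_iff_index_eq by (metis length_append less_add_same_cancel1 trans_less_add1 zero_less_Suc length_Cons)
    then show ?thesis using w by auto
  qed
  have ext: "\<And>j. j \<le> length w \<Longrightarrow> ext_letter w j = (w @ [B]) ! j"
    unfolding ext_letter_def B_def by (auto simp: nth_append)
  define G where "G i \<longleftrightarrow> Suc i < length s \<and> s!i < x \<and> x < s!Suc i" for i
  have ls: "length s = Suc (length q)" "length w = Suc (length p + length q)" using s_def w by auto
  have nthj: "\<And>i. (w @ [B]) ! Suc (length p + i) = s ! i"
    using ws by (simp add: nth_append)
  have gapG: "\<And>j. gap_ok w x j \<longleftrightarrow> (\<exists>i. j = Suc (length p + i) \<and> G i)"
  proof
    fix j assume gj: "gap_ok w x j"
    then obtain k where k: "k < length w" "w ! k = x" "k < j" "j < length w"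
      "ext_letter w j < x" "x < ext_letter w (Suc j)" unfolding gap_ok_def by blast
    have "k \<in> {k. k < length w \<and> w ! k = x}" using k(1,2) by simp
    then have kp: "k = length p" unfolding idx by simp
    define i where "i = j - Suc (length p)"
    have ji: "j = Suc (length p + i)" using k kp i_def by simp
    have e1: "ext_letter w j = s ! i"
      using ext[of j] nthj[of i] k(4) ji by simp
    have e2: "ext_letter w (Suc j) = s ! Suc i"
    proof -
      have "ext_letter w (Suc j) = (w @ [B]) ! Suc j" using ext[of "Suc j"] k(4) by simp
      also have "Suc j = Suc (length p + Suc i)" using ji by simp
      finally show ?thesis using nthj[of "Suc i"] ji by simp
    qed
    have "Suc i < length s" using k(4) ji ls by simp
    then have "G i" unfolding G_def using e1 e2 k(5,6) by simp
    then show "\<exists>i. j = Suc (length p + i) \<and> G i" using ji by blast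
  next
    fix j assume "\<exists>i. j = Suc (length p + i) \<and> G i"
    then obtain i where ji: "j = Suc (length p + i)" "G i" by blast
    have jl: "j < length w" using ji ls unfolding G_def by simp
    have e1: "ext_letter w j = s ! i"
      using ext[of j] nthj[of i] jl ji by simp
    have e2: "ext_letter w (Suc j) = s ! Suc i"
    proof -
      have "ext_letter w (Suc j) = (w @ [B]) ! Suc j" using ext[of "Suc j"] jl by simp
      also have "Suc j = Suc (length p + Suc i)" using ji by simp
      finally show ?thesis using nthj[of "Suc i"] ji by simp
    qed
    have "ext_letter w j < x" "x < ext_letter w (Suc j)"
      using e1 e2 ji(2) unfolding G_def by auto
    moreover have "length p < length w" "length p < j" using w ji by auto
    ultimately show "gap_ok w x j" unfolding gap_ok_def using jl wpx by blast
  qed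
  show ?thesis
  proof (cases "g x s")
    case None
    have "\<not> (\<exists>j. gap_ok w x j)" using gapG g_None[OF None] unfolding G_def by blast
    then have "move_right x w = w" unfolding move_right_def by auto
    then show ?thesis using Mw None ws B_def by simp
  next
    case (Some r)
    from g_Some[OF Some] obtain i where i: "G i" "\<forall>i'<i. \<not> G i'" "r = take (Suc i) s @ x # drop (Suc i) s"
      unfolding G_def by blast
    define j0 where "j0 = Suc (length p + i)"
    have least: "(LEAST j. gap_ok w x j) = j0"
    proof (rule Least_equality)
      show "gap_ok w x j0" using gapG i j0_def by blast
    next
      fix j assume "gap_ok w x j"
      then obtain i' where i': "j = Suc (length p + i')" "G i'" using gapG by blast
      then have "\<not> i' < i" using i(2) by blast
      then show "j0 \<le> j" using i' j0_def by simp
    qed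
    have ex: "\<exists>j. gap_ok w x j" using gapG i by blast
    have iq: "Suc i \<le> length q" using i(1) ls unfolding G_def by simp
    have mr: "move_right x w = take (length p) w @ drop (Suc (length p)) (take (Suc j0) w) @ [x] @ drop (Suc j0) w"
      unfolding move_right_def using xw ex idx least by (simp add: Let_def)
    have t1: "take (length p) w = p" using w by simp
    have t2: "take (Suc j0) w = p @ x # take (Suc i) q" using w j0_def by simp
    have t3: "drop (Suc j0) w = drop (Suc i) q" using w j0_def by simp
    have rr: "r = take (Suc i) q @ x # drop (Suc i) q @ [B]" using i(3) iq s_def by simp
    show ?thesis using mr t1 t2 t3 rr Mw Some B_def by simp
  qed
qed

lemma fold_bridge:
  "distinct w \<Longrightarrow> \<forall>a\<in>set w. a \<le> length w \<Longrightarrow> set xs \<subseteq> set w \<Longrightarrow>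
   fold move_right xs w @ [length w + 1] = fold M xs (w @ [length w + 1])"
proof (induction xs arbitrary: w)
  case (Cons x xs)
  define B where "B = length w + 1"
  have br: "move_right x w @ [B] = M x (w @ [B])" using bridge Cons.prems B_def by simp
  have Bw: "B \<notin> set w" using Cons.prems(2) B_def by auto
  have d: "distinct (w @ [B])" using Bw Cons.prems by simp
  have p: "distinct (move_right x w @ [B])" "set (move_right x w @ [B]) = set (w @ [B])"
    using M_props[OF d, of x] br by auto
  have Bm: "B \<notin> set (move_right x w)" using p(1) by simp
  have sm: "set (move_right x w) = set w" using p(2) Bm Bw by auto
  have dm: "distinct (move_right x w)" using p(1) by simp
  have lm: "length (move_right x w) = length w"
    using distinct_card[OF dm] distinct_card[OF Cons.prems(1)] sm by simp
  have "fold move_right xs (move_right x w) @ [B] = fold M xs (move_right x w @ [B])"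
    using Cons.IH[OF dm] sm lm Cons.prems B_def by simp
  then show ?case using br B_def by simp
qed simp

theorem theorem4p1:
  fixes n :: nat and \<pi> :: "nat list"
  assumes "is_perm n \<pi>"
  shows "stack_sort \<pi> = fold move_right (descent_tops \<pi>) \<pi>"
proof -
  have d: "distinct \<pi>" and s: "set \<pi> = {1..n}" using assms unfolding is_perm_def by auto
  have ln: "length \<pi> = n" using distinct_card[OF d] s by simp
  have le: "\<forall>a\<in>set \<pi>. a \<le> length \<pi>" using s ln by auto
  have "fold move_right (descent_tops \<pi>) \<pi> @ [length \<pi> + 1] = fold M (dtr \<pi>) (\<pi> @ [length \<pi> + 1])"
    using fold_bridge[OF d le] dtr_set descent_tops_dtr by simp
  also have "\<dots> = stack_sort \<pi> @ [length \<pi> + 1]"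
  proof -
    have lt: "\<forall>a\<in>set \<pi>. a < length \<pi> + 1" using le by auto
    show ?thesis using gen[OF d lt] .
  qed
  finally show ?thesis by (simp del: stack_sort.simps)
qed

end
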